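(* Let $D$ be a BN distribution on $\{0,1\}^n$ with all conditional probabilities in $(0,1)$, whose variable order $1,\dots,n$ is a topological order of the DAG, and let $f:\{0,1\}^n\to\mathbb{R}$. Fix $0\le k\le n$ and $\alpha\in\{0,1\}^k$. For every $u\in\{0,1\}^{n-k}$, letting $Y=(X_{n-k+1},\dots,X_n)$, $$g_\alpha(u)=\mathbb{E}\big[f(uY)\,\phi_{0^{n-k}\alpha}(uY)\;\big|\;(X_1,\dots,X_{n-k})=u\big],$$ where $X\sim D$.
   Context: A Bayesian network (BN) on binary variables $X_1,\dots,X_n$ is a directed acyclic graph on $[n]$ with parent sets $\operatorname{pa}(v)$ and conditional distributions with $P(X_1,\dots,X_n)=\prod_v P(X_v\mid X_{\operatorname{pa}(v)})$. Let $\mu_{v,x_{\operatorname{pa}(v)}}=P(X_v=1\mid X_{\operatorname{pa}(v)}=x_{\operatorname{pa}(v)})$, $\sigma_{v,x_{\operatorname{pa}(v)}}=\sqrt{\mu_{v,x_{\operatorname{pa}(v)}}(1-\mu_{v,x_{\operatorname{pa}(v)}})}$, $\phi_v(x)=(x_v-\mu_{v,x_{\operatorname{pa}(v)}})/\sigma_{v,x_{\operatorname{pa}(v)}}$, $\phi_S=\prod_{v\in S}\phi_v$, and $\hat f_S=\mathbb{E}_D[f(X)\phi_S(X)]$. Sets $S\subseteq[n]$ are identified with strings $\gamma\in\{0,1\}^n$ via $\gamma_i=1\iff i\in S$, and we write $\phi_\gamma,\hat f_\gamma$ accordingly. For $\beta\in\{0,1\}^{n-k}$ and $\alpha\in\{0,1\}^k$,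 $\beta\alpha\in\{0,1\}^n$ is their concatenation ($\beta$ occupies coordinates $1,\dots,n-k$); $0^m$ is the all-zero string of length $m$; for $u\in\{0,1\}^{n-k}$ and $y\in\{0,1\}^k$, $uy\in\{0,1\}^n$ is the concatenated input. Define $g_\alpha(u)=\sum_{\beta\in\{0,1\}^{n-k}}\hat f_{\beta\alpha}\,\phi_{\beta0^k}(u0^k)$ for $u\in\{0,1\}^{n-k}$ (note $\phi_{\beta 0^k}(x)$ depends only on $x_1,\dots,x_{n-k}$ since the order is topological). *)

theory Defs
  imports Complex_Main
begin

text \<open>Points of {0,1}^n are boolean lists of length n; variable i (1-based in the
paper) is list position i-1. A Bayesian network is given by parent sets
pa v and conditional probabilities mu v x = P(X_v = 1 | X_pa(v) = x_pa(v)),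
written as a function of the whole assignment x that depends only on the
coordinates in pa v.\<close>

definition bn_ok :: "nat \<Rightarrow> (nat \<Rightarrow> nat set) \<Rightarrow> (nat \<Rightarrow> bool list \<Rightarrow> real) \<Rightarrow> bool" where
  "bn_ok n pa mu \<longleftrightarrow>
     (\<forall>v<n. pa v \<subseteq> {..<v}) \<and>
     (\<forall>v<n. \<forall>x y. length x = n \<longrightarrow> length y = n \<longrightarrow> (\<forall>j\<in>pa v. x ! j = y ! j)
                 \<longrightarrow> mu v x = mu v y) \<and>
     (\<forall>v<n. \<forall>x. length x = n \<longrightarrow> 0 < mu v x \<and> mu v x < 1)"

definition bn_prob :: "nat \<Rightarrow> (nat \<Rightarrow> bool list \<Rightarrow> real) \<Rightarrow> bool list \<Rightarrow> real" where
  "bn_prob n mu x = (\<Prod>v<n. if x ! v then mu v x else 1 - mu v x)"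

definition bn_expect :: "nat \<Rightarrow> (nat \<Rightarrow> bool list \<Rightarrow> real) \<Rightarrow> (bool list \<Rightarrow> real) \<Rightarrow> real" where
  "bn_expect n mu h = (\<Sum>x\<in>{x. length x = n}. bn_prob n mu x * h x)"

definition phi :: "(nat \<Rightarrow> bool list \<Rightarrow> real) \<Rightarrow> nat \<Rightarrow> bool list \<Rightarrow> real" where
  "phi mu v x = ((if x ! v then 1 else 0) - mu v x) / sqrt (mu v x * (1 - mu v x))"

definition phiS :: "(nat \<Rightarrow> bool list \<Rightarrow> real) \<Rightarrow> bool list \<Rightarrow> bool list \<Rightarrow> real" where
  "phiS mu \<gamma> x = (\<Prod>v\<in>{v. v < length \<gamma> \<and> \<gamma> ! v}. phi mu v x)"

definition fhat :: "nat \<Rightarrow> (nat \<Rightarrow> bool list \<Rightarrow> real) \<Rightarrow> (bool list \<Rightarrow> real) \<Rightarrow> bool list \<Rightarrow> real" where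
  "fhat n mu f \<gamma> = bn_expect n mu (\<lambda>x. f x * phiS mu \<gamma> x)"

definition g_alpha :: "nat \<Rightarrow> nat \<Rightarrow> (nat \<Rightarrow> bool list \<Rightarrow> real) \<Rightarrow> (bool list \<Rightarrow> real)
    \<Rightarrow> bool list \<Rightarrow> bool list \<Rightarrow> real" where
  "g_alpha n k mu f \<alpha> u =
     (\<Sum>\<beta>\<in>{\<beta>. length \<beta> = n - k}.
        fhat n mu f (\<beta> @ \<alpha>) * phiS mu (\<beta> @ replicate k False) (u @ replicate k False))"

text \<open>Conditional expectation E[h(X) | (X_1..X_{n-k}) = u] under the BN distribution,
  by the elementary formula (the conditioning event has positive probability).\<close>
definition cond_expect_prefix :: "nat \<Rightarrow> (nat \<Rightarrow> bool list \<Rightarrow> real) \<Rightarrow> (bool list \<Rightarrow> real)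
    \<Rightarrow> bool list \<Rightarrow> real" where
  "cond_expect_prefix n mu h u =
     (\<Sum>x\<in>{x. length x = n \<and> take (length u) x = u}. bn_prob n mu x * h x)
     / (\<Sum>x\<in>{x. length x = n \<and> take (length u) x = u}. bn_prob n mu x)"

end

theory Submission imports Defs begin

definition pv :: "(nat \<Rightarrow> bool list \<Rightarrow> real) \<Rightarrow> nat \<Rightarrow> bool list \<Rightarrow> real" where
  "pv mu v x = (if x ! v then mu v x else 1 - mu v x)"

lemma phi_pair:
  assumes "0 < mu v x" "mu v x < 1" "mu v y = mu v x"
  shows "phi mu v x * phi mu v y + 1 = (if x!v = y!v then 1 / pv mu v x else 0)"
proof -
  define t where "t = mu v x"
  have t: "0 < t" "t < 1" using assms t_def by auto
  have ss: "sqrt (t * (1 - t)) * sqrt (t * (1 - t)) = t * (1 - t)"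
    using t by (simp add: real_sqrt_mult_self)
  have sp: "sqrt (t * (1 - t)) > 0" using t by simp
  have e: "phi mu v x * phi mu v y = ((if x ! v then 1 else 0) - t) * ((if y ! v then 1 else 0) - t) / (t * (1 - t))"
    unfolding phi_def using assms(3) t_def ss by simp
  show ?thesis unfolding e pv_def t_def[symmetric] using t
    by (cases "x!v"; cases "y!v") (auto simp: field_simps)
qed

lemma mu_agree:
  assumes "bn_ok n pa mu" "v < n" "length x = n" "length y = n" "\<forall>j<v. x ! j = y ! j"
  shows "mu v x = mu v y"
proof -
  have "pa v \<subseteq> {..<v}" using assms(1,2) unfolding bn_ok_def by blast
  then have "\<forall>j\<in>pa v. x ! j = y ! j" using assms(5) by auto
  then show ?thesis using assms(1-4) unfolding bn_ok_def by blast
qed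

lemma mu_bounds:
  assumes "bn_ok n pa mu" "v < n" "length x = n"
  shows "0 < mu v x \<and> mu v x < 1"
proof -
  have "\<forall>v<n. \<forall>x. length x = n \<longrightarrow> 0 < mu v x \<and> mu v x < 1" using assms(1) unfolding bn_ok_def by (elim conjE)
  then show ?thesis using assms(2,3) by blast
qed

lemma fin_len: "finite {x::bool list. length x = n}"
proof -
  have "{x::bool list. length x = n} = {xs. set xs \<subseteq> UNIV \<and> length xs = n}" by auto
  then show ?thesis using finite_lists_length_eq[of "UNIV::bool set" n] by simp
qed

lemma fin_len2: "finite {x::bool list. length x = n \<and> P x}"
  by (rule finite_subset[OF _ fin_len[of n]]) auto

lemma marg_aux:
  assumes "bn_ok n pa mu"
  shows "n - m = d \<Longrightarrow> m \<le> n \<Longrightarrow> length u = m \<Longrightarrow> (\<Sum>x\<in>{x. length x = n \<and> take m x = u}. bn_prob n mu x)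
       = (\<Prod>v<m. pv mu v (u @ replicate (n-m) False))"
proof (induction d arbitrary: m u)
  case 0
  then have mn: "m = n" by simp
  have e: "{x. length x = n \<and> take m x = u} = {u}" using 0 mn by auto
  have z: "n - m = 0" using 0 by simp
  have r: "u @ replicate (n - m) False = u" unfolding z by simp
  show ?case unfolding e r using 0 unfolding bn_prob_def pv_def by (simp add: mn)
next
  case (Suc d)
  have mn: "m < n" using Suc by simp
  define S where "S b = {x. length x = n \<and> take (Suc m) x = u @ [b]}" for b
  have split: "{x. length x = n \<and> take m x = u} = S True \<union> S False"
  proof (rule set_eqI, rule iffI)
    fix x assume "x \<in> {x. length x = n \<and> take m x = u}"
    then have "length x = n" "take m x = u" by auto
    then have "take (Suc m) x = u @ [x ! m]" using mn by (simp add: take_Suc_conv_app_nth)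
    then show "x \<in> S True \<union> S False" unfolding S_def using \<open>length x = n\<close> by (cases "x!m") auto
  next
    fix x assume "x \<in> S True \<union> S False"
    then obtain b where "length x = n" "take (Suc m) x = u @ [b]" unfolding S_def by auto
    then have "take m (take (Suc m) x) = u" using Suc.prems by simp
    then show "x \<in> {x. length x = n \<and> take m x = u}" using \<open>length x = n\<close> by (simp add: min_def)
  qed
  have disj: "S True \<inter> S False = {}" unfolding S_def by auto
  have finS: "finite (S b)" for b unfolding S_def by (rule fin_len2)
  have IH: "sum (bn_prob n mu) (S b) = (\<Prod>v<Suc m. pv mu v ((u @ [b]) @ replicate (n - Suc m) False))" for b
  proof -
    have "n - Suc m = d" using Suc.prems by simp
    then show ?thesis unfolding S_def using Suc.IH[of "Suc m" "u @ [b]"] Suc.prems mn by simp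
  qed
  define U where "U = u @ replicate (n-m) False"
  define W where "W b = (u @ [b]) @ replicate (n - Suc m) False" for b
  have lU: "length U = n" "length (W b) = n" for b unfolding U_def W_def using Suc.prems mn by auto
  have agree: "\<forall>j<m. W b ! j = U ! j" for b unfolding U_def W_def using Suc.prems
    by (simp add: nth_append)
  have pvs: "pv mu v (W b) = pv mu v U" if "v < m" for v b
  proof -
    have "mu v (W b) = mu v U" using mu_agree[OF assms(1) _ lU(2) lU(1)] agree that mn by simp
    moreover have "W b ! v = U ! v" using agree that by simp
    ultimately show ?thesis unfolding pv_def by simp
  qed
  have muW: "mu m (W True) = mu m (W False)"
    using mu_agree[OF assms(1) mn lU(2) lU(2)] agree by simp
  have WT: "W b ! m = b" for b unfolding W_def using Suc.prems by (simp add: nth_append)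
  have "sum (bn_prob n mu) {x. length x = n \<and> take m x = u} = sum (bn_prob n mu) (S True) + sum (bn_prob n mu) (S False)"
    unfolding split by (rule sum.union_disjoint[OF finS finS disj])
  also have "\<dots> = (\<Prod>v<m. pv mu v U) * (pv mu m (W True) + pv mu m (W False))"
    unfolding IH W_def[symmetric] by (simp add: pvs distrib_left)
  also have "\<dots> = (\<Prod>v<m. pv mu v U)" unfolding pv_def WT muW by simp
  finally show ?case unfolding U_def .
qed

lemma marg:
  assumes "bn_ok n pa mu" "m \<le> n" "length u = m"
  shows "(\<Sum>x\<in>{x. length x = n \<and> take m x = u}. bn_prob n mu x)
       = (\<Prod>v<m. pv mu v (u @ replicate (n-m) False))"
  using marg_aux[OF assms(1) refl assms(2,3)] .

lemma phiS_pref: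
  assumes "length \<beta> = m"
  shows "phiS mu (\<beta> @ replicate r False) z = (\<Prod>v\<in>{v. v<m \<and> \<beta>!v}. phi mu v z)"
proof -
  have "{v. v < length (\<beta> @ replicate r False) \<and> (\<beta> @ replicate r False) ! v} = {v. v<m \<and> \<beta>!v}"
  proof (rule Collect_cong)
    fix v show "(v < length (\<beta> @ replicate r False) \<and> (\<beta> @ replicate r False) ! v) = (v<m \<and> \<beta>!v)"
      using assms by (cases "v < m") (auto simp: nth_append)
  qed
  then show ?thesis unfolding phiS_def by simp
qed

lemma sum_subsets:
  "(\<Sum>\<beta>\<in>{\<beta>::bool list. length \<beta> = m}. \<Prod>v\<in>{v. v<m \<and> \<beta>!v}. (a v::real)) = (\<Prod>v<m. a v + 1)"
proof -
  have bij: "bij_betw (\<lambda>\<beta>. {v. v<m \<and> \<beta>!v}) {\<beta>::bool list. length \<beta> = m} (Pow {..<m})"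
  proof (rule bij_betw_byWitness[where f'="\<lambda>X. map (\<lambda>v. v \<in> X) [0..<m]"])
    show "\<forall>a\<in>{\<beta>::bool list. length \<beta> = m}. map (\<lambda>v. v \<in> {v. v < m \<and> a ! v}) [0..<m] = a"
      by (auto simp: list_eq_iff_nth_eq)
    show "\<forall>a'\<in>Pow {..<m}. {v. v < m \<and> map (\<lambda>v. v \<in> a') [0..<m] ! v} = a'"
      by auto
  qed auto
  have "(\<Prod>v<m. a v + 1) = (\<Sum>X\<in>Pow {..<m}. prod a X)"
    using prod_add[of "{..<m}" a "\<lambda>_. 1"] by simp
  also have "\<dots> = (\<Sum>\<beta>\<in>{\<beta>::bool list. length \<beta> = m}. prod a {v. v<m \<and> \<beta>!v})"
    by (rule sum.reindex_bij_betw[OF bij, symmetric])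
  finally show ?thesis by simp
qed

lemma kernel:
  assumes bn: "bn_ok n pa mu" and mn: "m \<le> n" and lx: "length x = n" and ly: "length y = n"
  shows "(\<Sum>\<beta>\<in>{\<beta>. length \<beta> = m}. phiS mu (\<beta> @ replicate r False) x * phiS mu (\<beta> @ replicate r False) y)
     = (if take m x = take m y then 1 / (\<Prod>v<m. pv mu v y) else 0)"
proof -
  define a where "a v = phi mu v x * phi mu v y" for v
  have "(\<Sum>\<beta>\<in>{\<beta>. length \<beta> = m}. phiS mu (\<beta> @ replicate r False) x * phiS mu (\<beta> @ replicate r False) y)
      = (\<Sum>\<beta>\<in>{\<beta>::bool list. length \<beta> = m}. \<Prod>v\<in>{v. v<m \<and> \<beta>!v}. a v)"
  proof (rule sum.cong[OF refl])
    fix \<beta> :: "bool list" assume "\<beta> \<in> {\<beta>. length \<beta> = m}"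
    then have l: "length \<beta> = m" by simp
    show "phiS mu (\<beta> @ replicate r False) x * phiS mu (\<beta> @ replicate r False) y
       = (\<Prod>v\<in>{v. v<m \<and> \<beta>!v}. a v)"
      unfolding phiS_pref[OF l] a_def by (rule prod.distrib[symmetric])
  qed
  also have "\<dots> = (\<Prod>v<m. a v + 1)" by (rule sum_subsets)
  also have "\<dots> = (if take m x = take m y then 1 / (\<Prod>v<m. pv mu v y) else 0)"
  proof (cases "take m x = take m y")
    case True
    have agr: "x ! j = y ! j" if "j < m" for j
    proof -
      have "take m x ! j = take m y ! j" using True by simp
      then show ?thesis using that by simp
    qed
    have "a v + 1 = 1 / pv mu v y" if "v < m" for v
    proof -
      have vn: "v < n" using that mn by simp
      have "\<forall>j<v. x ! j = y ! j" using agr that by simp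
      then have e: "mu v y = mu v x" using mu_agree[OF bn vn lx ly] by simp
      have "0 < mu v x" "mu v x < 1" using mu_bounds[OF bn vn lx] by auto
      then have "a v + 1 = 1 / pv mu v x" unfolding a_def using phi_pair[of mu v x y] e agr that by simp
      then show ?thesis unfolding pv_def using e agr that by simp
    qed
    then have "(\<Prod>v<m. a v + 1) = (\<Prod>v<m. 1 / pv mu v y)" by simp
    also have "\<dots> = 1 / (\<Prod>v<m. pv mu v y)" by (simp add: prod_dividef)
    finally show ?thesis using True by simp
  next
    case False
    have "\<exists>j<m. x ! j \<noteq> y ! j"
    proof (rule ccontr)
      assume "\<not> ?thesis"
      then have "take m x = take m y" using lx ly mn by (auto simp: list_eq_iff_nth_eq)
      then show False using False by simp
    qed
    then obtain v where v: "v < m" "x ! v \<noteq> y ! v" and lt0: "\<forall>j<v. \<not> (j < m \<and> x ! j \<noteq> y ! j)"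
      using exists_least_iff[of "\<lambda>j. j < m \<and> x ! j \<noteq> y ! j"] by blast
    have lt: "\<forall>j<v. x ! j = y ! j" using lt0 v(1) by auto
    have vn: "v < n" using v mn by simp
    have e: "mu v y = mu v x" using mu_agree[OF bn vn lx ly] lt by simp
    have "0 < mu v x" "mu v x < 1" using mu_bounds[OF bn vn lx] by auto
    then have "a v + 1 = 0" unfolding a_def using phi_pair[of mu v x y] e v by simp
    then have "(\<Prod>v<m. a v + 1) = 0" by (intro prod_zero) (use v in auto)
    then show ?thesis using False by simp
  qed
  finally show ?thesis .
qed

lemma phiS_split:
  assumes "length \<beta> = m" "length \<alpha> = k"
  shows "phiS mu (\<beta> @ \<alpha>) z = phiS mu (\<beta> @ replicate k False) z * phiS mu (replicate m False @ \<alpha>) z"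
proof -
  define B where "B = {v. v<m \<and> \<beta>!v}"
  define C where "C = {v. v < length (replicate m False @ \<alpha>) \<and> (replicate m False @ \<alpha>) ! v}"
  have A: "{v. v < length (\<beta> @ \<alpha>) \<and> (\<beta> @ \<alpha>) ! v} = B \<union> C"
    unfolding B_def C_def
  proof (rule set_eqI)
    fix v show "v \<in> {v. v < length (\<beta> @ \<alpha>) \<and> (\<beta> @ \<alpha>) ! v} \<longleftrightarrow>
      v \<in> {v. v < m \<and> \<beta> ! v} \<union> {v. v < length (replicate m False @ \<alpha>) \<and> (replicate m False @ \<alpha>) ! v}"
      using assms by (cases "v < m") (auto simp: nth_append)
  qed
  have d: "B \<inter> C = {}" unfolding B_def C_def by (auto simp: nth_append)
  have fB: "finite B" unfolding B_def by simp
  have fC: "finite C" unfolding C_def by simp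
  show ?thesis unfolding phiS_pref[OF assms(1)] B_def[symmetric]
    unfolding phiS_def A C_def[symmetric] by (rule prod.union_disjoint[OF fB fC d])
qed

theorem mainTheorem2:
  fixes n k :: nat and pa :: "nat \<Rightarrow> nat set" and mu :: "nat \<Rightarrow> bool list \<Rightarrow> real"
    and f :: "bool list \<Rightarrow> real" and \<alpha> u :: "bool list"
  assumes "bn_ok n pa mu" and "k \<le> n" and "length \<alpha> = k" and "length u = n - k"
  shows "g_alpha n k mu f \<alpha> u =
         cond_expect_prefix n mu (\<lambda>x. f x * phiS mu (replicate (n - k) False @ \<alpha>) x) u"
proof -
  define m where "m = n - k"
  define U where "U = u @ replicate k False"
  define h where "h x = f x * phiS mu (replicate m False @ \<alpha>) x" for x
  define Phi where "Phi \<beta> x = phiS mu (\<beta> @ replicate k False) x" for \<beta> x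
  define L where "L = {x::bool list. length x = n}"
  define Lm where "Lm = {\<beta>::bool list. length \<beta> = m}"
  have mn: "m \<le> n" and nm: "n - m = k" unfolding m_def using assms(2) by auto
  have lU: "length U = n" unfolding U_def using assms(2,4) by simp
  have tU: "take m U = u" unfolding U_def m_def using assms(4) by simp
  have fL: "finite L" unfolding L_def by (rule fin_len)
  have fLm: "finite Lm" unfolding Lm_def by (rule fin_len)
  have fh: "fhat n mu f (\<beta> @ \<alpha>) = (\<Sum>x\<in>L. bn_prob n mu x * h x * Phi \<beta> x)" if "\<beta> \<in> Lm" for \<beta>
  proof -
    have lb: "length \<beta> = m" using that unfolding Lm_def by simp
    show ?thesis unfolding fhat_def bn_expect_def L_def[symmetric]
    proof (rule sum.cong[OF refl])
      fix x
      show "bn_prob n mu x * (f x * phiS mu (\<beta> @ \<alpha>) x) = bn_prob n mu x * h x * Phi \<beta> x"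
        unfolding phiS_split[OF lb assms(3)] h_def Phi_def by (simp only: mult_ac)
    qed
  qed
  have "g_alpha n k mu f \<alpha> u = (\<Sum>\<beta>\<in>Lm. \<Sum>x\<in>L. bn_prob n mu x * h x * Phi \<beta> x * Phi \<beta> U)"
    unfolding g_alpha_def m_def[symmetric] Lm_def[symmetric] U_def[symmetric]
  proof (rule sum.cong[OF refl])
    fix \<beta> assume b: "\<beta> \<in> Lm"
    show "fhat n mu f (\<beta> @ \<alpha>) * phiS mu (\<beta> @ replicate k False) U =
      (\<Sum>x\<in>L. bn_prob n mu x * h x * Phi \<beta> x * Phi \<beta> U)"
      unfolding fh[OF b] sum_distrib_right Phi_def ..
  qed
  also have "\<dots> = (\<Sum>x\<in>L. bn_prob n mu x * h x * (\<Sum>\<beta>\<in>Lm. Phi \<beta> x * Phi \<beta> U))"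
    by (subst sum.swap) (simp add: sum_distrib_left mult.assoc)
  also have "\<dots> = (\<Sum>x\<in>L. if take m x = u then bn_prob n mu x * h x / (\<Prod>v<m. pv mu v U) else 0)"
  proof (rule sum.cong)
    fix x assume "x \<in> L"
    then have lx: "length x = n" unfolding L_def by simp
    show "bn_prob n mu x * h x * (\<Sum>\<beta>\<in>Lm. Phi \<beta> x * Phi \<beta> U) =
      (if take m x = u then bn_prob n mu x * h x / (\<Prod>v<m. pv mu v U) else 0)"
      unfolding Phi_def Lm_def kernel[OF assms(1) mn lx lU] tU by simp
  qed simp
  also have "\<dots> = (\<Sum>x\<in>{x. length x = n \<and> take m x = u}. bn_prob n mu x * h x) / (\<Prod>v<m. pv mu v U)"
  proof -
    have e: "{x. length x = n \<and> take m x = u} = {x \<in> L. take m x = u}" unfolding L_def by auto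
    show ?thesis unfolding e sum_divide_distrib sum.inter_filter[OF fL] by (intro sum.cong refl) simp
  qed
  also have "(\<Prod>v<m. pv mu v U) = (\<Sum>x\<in>{x. length x = n \<and> take m x = u}. bn_prob n mu x)"
    using marg[OF assms(1) mn, of u] assms(4) nm unfolding U_def m_def by simp
  finally show ?thesis unfolding cond_expect_prefix_def h_def m_def assms(4) by simp
qed

end
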